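(* Assume the reward is bounded, $r(y,x_0)\in[-D,D]$, and let $\lambda>0$, $M\ge1$, $1\le I\le T$, $\epsilon>0$. Suppose that the energy estimates $\widehat{\mathcal E}(y,x_s)$ used in Algorithm 1 satisfy $|\mathcal E(y,x_s)-\widehat{\mathcal E}(y,x_s)|\le\epsilon$ for every query $y$ and every intermediate state $x_s$, and that $C-\epsilon-h(\epsilon,M,\lambda,D)>0$, where $$h(\epsilon,M,\lambda,D)=\frac{e^{D/\lambda}-e^{-D/\lambda}}{2}\sqrt{\frac{2}{M}\log\!\left(\frac{2}{\epsilon}\right)}.$$ Let $q(x_0\mid y)$ be the law of the output of Algorithm 1. Then $$\mathsf{TV}\big(q(x_0\mid y)\,\|\,p(x_0\mid y)\big)\le I\left(\frac{2\epsilon+h(\epsilon,M,\lambda,D)}{C-\epsilon-h(\epsilon,M,\lambda,D)}\right)+I\epsilon=\tilde{\mathcal O}\!\left(\frac{I}{\sqrt M}+I\epsilon\right).$$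
   Context: Setting: MLM framework with vocabulary $\mathcal V$, response length $d_x$, nested mask sets, backward generation $x_T\to\cdots\to x_0$ with $x_T$ the fixed fully masked sequence; $p_{\mathrm{ref}}$ is a reference model giving transitions $p_{\mathrm{ref}}(x_s\mid y,x_t)$ and completions $p_{\mathrm{ref}}(x_0\mid y,x_s)$ for a query $y$. Target distribution: $p(x_0\mid y)=p_{\mathrm{ref}}(x_0\mid y)\exp(r(y,x_0)/\lambda)/C$ with $C=\sum_{x_0}p_{\mathrm{ref}}(x_0\mid y)\exp(r(y,x_0)/\lambda)$. Energy: $\mathcal E(y,x_s)=\mathbb E_{p_{\mathrm{ref}}(x_0\mid y,x_s)}[\exp(r(y,x_0)/\lambda)]$. Algorithm 1 (ETS): given $I$ guidance steps with timesteps $t_i=iT/I$ ($t_0=0$, $t_I=T$), start at $x_{t_I}=x_T$; for $i=I,I-1,\dots,1$: draw $M$ candidates $x_{t_{i-1}}(1),\dots,x_{t_{i-1}}(M)$ i.i.d. from $p_{\mathrm{ref}}(x_{t_{i-1}}\mid y,x_{t_i})$; compute weights $w_m=\widehat{\mathcal E}(y,x_{t_{i-1}}(m))/\sum_{m'=1}^M\widehat{\mathcal E}(y,x_{t_{i-1}}(m'))$; select index $m^*$ with probability $w_{m^*}$ and set $x_{t_{i-1}}=x_{t_{i-1}}(m^* )$. The output is $x_0$. Total variation distance: $\mathsf{TV}(p\|q)=\frac12\sum_x|p(x)-q(x)|$. *)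

theory Defs
  imports "HOL-Probability.Probability"
begin

text \<open>
Sequences (states, with masks) form a finite type 'x;
queries have type 'y; time is real in [0,T].
  ptr y t s x  =  p_ref(x_s | y, x_t = x)   (for s < t)
  compl y s x    =  p_ref(x_0 | y, x_s = x)
\<close>

text \<open>Consistency of the reference model: completions are the conditionals of the same
model, i.e. completing from time t equals transitioning to s and completing from there,
and completing a time-0 (clean) state returns it.\<close>
definition consistent_ref ::
  "real \<Rightarrow> ('y \<Rightarrow> real \<Rightarrow> real \<Rightarrow> 'x \<Rightarrow> 'x pmf) \<Rightarrow> ('y \<Rightarrow> real \<Rightarrow> 'x \<Rightarrow> 'x pmf) \<Rightarrow> bool" where
  "consistent_ref T ptr compl \<longleftrightarrow>
     (\<forall>y s t x. 0 \<le> s \<and> s < t \<and> t \<le> T \<longrightarrow> compl y t x = bind_pmf (ptr y t s x) (compl y s)) \<and>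
     (\<forall>y x. compl y 0 x = return_pmf x)"

definition energy ::
  "('y \<Rightarrow> real \<Rightarrow> 'x \<Rightarrow> 'x pmf) \<Rightarrow> ('y \<Rightarrow> 'x \<Rightarrow> real) \<Rightarrow> real \<Rightarrow> 'y \<Rightarrow> real \<Rightarrow> 'x \<Rightarrow> real" where
  "energy compl r lam y s x = measure_pmf.expectation (compl y s x) (\<lambda>x0. exp (r y x0 / lam))"

text \<open>Reference marginal p_ref(x_0|y) = completion from the fully masked x_T.\<close>
definition pref0 :: "('y \<Rightarrow> real \<Rightarrow> 'x \<Rightarrow> 'x pmf) \<Rightarrow> real \<Rightarrow> 'x \<Rightarrow> 'y \<Rightarrow> 'x pmf" where
  "pref0 compl T xT y = compl y T xT"

definition normC ::
  "('y \<Rightarrow> real \<Rightarrow> 'x \<Rightarrow> 'x pmf) \<Rightarrow> real \<Rightarrow> 'x \<Rightarrow> ('y \<Rightarrow> 'x \<Rightarrow> real) \<Rightarrow> real \<Rightarrow> 'y \<Rightarrow> real" where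
  "normC compl T xT r lam y =
     (\<Sum>x0\<in>UNIV. pmf (pref0 compl T xT y) x0 * exp (r y x0 / lam))"

definition target ::
  "('y \<Rightarrow> real \<Rightarrow> 'x::finite \<Rightarrow> 'x pmf) \<Rightarrow> real \<Rightarrow> 'x \<Rightarrow> ('y \<Rightarrow> 'x \<Rightarrow> real) \<Rightarrow> real \<Rightarrow> 'y \<Rightarrow> 'x pmf" where
  "target compl T xT r lam y =
     embed_pmf (\<lambda>x0. pmf (pref0 compl T xT y) x0 * exp (r y x0 / lam) / normC compl T xT r lam y)"

fun iid_list :: "nat \<Rightarrow> 'a pmf \<Rightarrow> 'a list pmf" where
  "iid_list 0 p = return_pmf []"
| "iid_list (Suc n) p = bind_pmf p (\<lambda>a. map_pmf (Cons a) (iid_list n p))"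

definition select_pmf :: "('x \<Rightarrow> real) \<Rightarrow> 'x list \<Rightarrow> 'x pmf" where
  "select_pmf w xs =
     map_pmf (\<lambda>m. xs ! m)
       (embed_pmf (\<lambda>m. if m < length xs then w (xs ! m) / (\<Sum>k<length xs. w (xs ! k)) else 0))"

definition ets_step ::
  "('y \<Rightarrow> real \<Rightarrow> real \<Rightarrow> 'x \<Rightarrow> 'x pmf) \<Rightarrow> ('y \<Rightarrow> real \<Rightarrow> 'x \<Rightarrow> real) \<Rightarrow> nat \<Rightarrow> 'y \<Rightarrow> real \<Rightarrow> real \<Rightarrow> 'x \<Rightarrow> 'x pmf" where
  "ets_step ptr Ehat M y t s x =
     bind_pmf (iid_list M (ptr y t s x)) (select_pmf (Ehat y s))"

definition tstep :: "real \<Rightarrow> nat \<Rightarrow> nat \<Rightarrow> real" where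
  "tstep T I i = real i * T / real I"

text \<open>Law of x_0 when Algorithm 1 is at step i in state x (= x_{t_i}).\<close>
fun ets_from ::
  "real \<Rightarrow> nat \<Rightarrow> ('y \<Rightarrow> real \<Rightarrow> real \<Rightarrow> 'x \<Rightarrow> 'x pmf) \<Rightarrow> ('y \<Rightarrow> real \<Rightarrow> 'x \<Rightarrow> real) \<Rightarrow> nat \<Rightarrow> 'y \<Rightarrow> nat \<Rightarrow> 'x \<Rightarrow> 'x pmf" where
  "ets_from T I ptr Ehat M y 0 x = return_pmf x"
| "ets_from T I ptr Ehat M y (Suc i) x =
     bind_pmf (ets_step ptr Ehat M y (tstep T I (Suc i)) (tstep T I i) x)
              (ets_from T I ptr Ehat M y i)"

definition ets_output ::
  "real \<Rightarrow> nat \<Rightarrow> ('y \<Rightarrow> real \<Rightarrow> real \<Rightarrow> 'x \<Rightarrow> 'x pmf) \<Rightarrow> ('y \<Rightarrow> real \<Rightarrow> 'x \<Rightarrow> real) \<Rightarrow> nat \<Rightarrow> 'x \<Rightarrow> 'y \<Rightarrow> 'x pmf" where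
  "ets_output T I ptr Ehat M xT y = ets_from T I ptr Ehat M y I xT"

definition TV :: "'x::finite pmf \<Rightarrow> 'x pmf \<Rightarrow> real" where
  "TV p q = (1/2) * (\<Sum>x\<in>UNIV. \<bar>pmf p x - pmf q x\<bar>)"

definition hfun :: "real \<Rightarrow> nat \<Rightarrow> real \<Rightarrow> real \<Rightarrow> real" where
  "hfun eps M lam D = (exp (D / lam) - exp (- D / lam)) / 2 * sqrt (2 / real M * ln (2 / eps))"

end

theory Submission
  imports Defs
begin


lemma iid_len: "xs \<in> set_pmf (iid_list n p) \<Longrightarrow> length xs = n"
  by (induction n arbitrary: xs) auto

lemma iid_finite: "finite (set_pmf (iid_list n (p::'a::finite pmf)))"
proof -
  have "set_pmf (iid_list n p) \<subseteq> {xs. length xs = n}" using iid_len by blast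
  thus ?thesis using finite_list_length finite_subset by blast
qed

lemma iid_int[simp]: "integrable (measure_pmf (iid_list n (p::'a::finite pmf))) (h :: _ \<Rightarrow> real)"
  by (rule integrable_measure_pmf_finite[OF iid_finite])

lemma exp_sum: "measure_pmf.expectation (p::'a::finite pmf) (h::_\<Rightarrow>real) = (\<Sum>a\<in>UNIV. pmf p a * h a)"
  by (subst integral_measure_pmf[of UNIV]) auto

lemma iid_suc_exp:
  "measure_pmf.expectation (iid_list (Suc n) (p::'a::finite pmf)) (h::_\<Rightarrow>real)
   = (\<Sum>a\<in>UNIV. pmf p a * measure_pmf.expectation (iid_list n p) (\<lambda>xs. h (a # xs)))"
  by (simp add: pmf_expectation_bind[of UNIV] iid_finite)

lemma iid_E1: "measure_pmf.expectation (iid_list n (p::'a::finite pmf)) (\<lambda>xs. sum_list (map h xs))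
   = real n * (\<Sum>a\<in>UNIV. pmf p a * (h a :: real))"
proof (induction n)
  case 0 then show ?case by simp
next
  case (Suc n)
  have "measure_pmf.expectation (iid_list (Suc n) p) (\<lambda>xs. sum_list (map h xs))
    = (\<Sum>a\<in>UNIV. pmf p a * (h a + real n * (\<Sum>a\<in>UNIV. pmf p a * h a)))"
    unfolding iid_suc_exp by (simp add: Suc)
  also have "\<dots> = (\<Sum>a\<in>UNIV. pmf p a * h a) + (\<Sum>a\<in>UNIV. pmf p a) * (real n * (\<Sum>a\<in>UNIV. pmf p a * h a))"
    by (simp add: distrib_left sum.distrib sum_distrib_right)
  also have "(\<Sum>a\<in>UNIV. pmf p a) = 1" by (rule sum_pmf_eq_1) auto
  finally show ?case by (simp add: algebra_simps)
qed

lemma iid_E2: "measure_pmf.expectation (iid_list n (p::'a::finite pmf)) (\<lambda>xs. (sum_list (map h xs))\<^sup>2)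
   = real n * (\<Sum>a\<in>UNIV. pmf p a * (h a)\<^sup>2) + real n * (real n - 1) * (\<Sum>a\<in>UNIV. pmf p a * (h a :: real))\<^sup>2"
proof (induction n)
  case 0 then show ?case by simp
next
  case (Suc n)
  let ?A = "\<Sum>a\<in>UNIV. pmf p a * (h a)\<^sup>2" and ?B = "\<Sum>a\<in>UNIV. pmf p a * h a"
  have "\<And>a. measure_pmf.expectation (iid_list n p) (\<lambda>xs. (h a + sum_list (map h xs))\<^sup>2)
     = (h a)\<^sup>2 + 2 * h a * (real n * ?B) + (real n * ?A + real n * (real n - 1) * ?B\<^sup>2)"
  proof -
    fix a
    have "(\<lambda>xs. (h a + sum_list (map h xs))\<^sup>2) = (\<lambda>xs. (h a)\<^sup>2 + (2 * h a) * sum_list (map h xs) + (sum_list (map h xs))\<^sup>2)"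
      by (auto simp: power2_eq_square algebra_simps)
    then show "measure_pmf.expectation (iid_list n p) (\<lambda>xs. (h a + sum_list (map h xs))\<^sup>2)
     = (h a)\<^sup>2 + 2 * h a * (real n * ?B) + (real n * ?A + real n * (real n - 1) * ?B\<^sup>2)"
      by (simp add: iid_E1 Suc)
  qed
  then have "measure_pmf.expectation (iid_list (Suc n) p) (\<lambda>xs. (sum_list (map h xs))\<^sup>2)
    = (\<Sum>a\<in>UNIV. pmf p a * ((h a)\<^sup>2 + 2 * h a * (real n * ?B) + (real n * ?A + real n * (real n - 1) * ?B\<^sup>2)))"
    unfolding iid_suc_exp by simp
  also have "\<dots> = ?A + 2 * real n * ?B * ?B + (\<Sum>a\<in>UNIV. pmf p a) * (real n * ?A + real n * (real n - 1) * ?B\<^sup>2)"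
  proof -
    define A where "A = ?A"
    define B where "B = ?B"
    define c where "c = real n * A + real n * (real n - 1) * B\<^sup>2"
    have "(\<Sum>a\<in>UNIV. pmf p a * ((h a)\<^sup>2 + 2 * h a * (real n * B) + c))
       = (\<Sum>a\<in>UNIV. pmf p a * (h a)\<^sup>2) + (2 * real n * B) * (\<Sum>a\<in>UNIV. pmf p a * h a) + (\<Sum>a\<in>UNIV. pmf p a) * c"
      by (simp add: distrib_left sum.distrib sum_distrib_right sum_distrib_left algebra_simps)
    then show ?thesis unfolding A_def B_def c_def by simp
  qed
  also have "(\<Sum>a\<in>UNIV. pmf p a) = 1" by (rule sum_pmf_eq_1) auto
  finally show ?case by (simp add: algebra_simps power2_eq_square)
qed



lemma sum_list_cong_set: "(\<And>a. a \<in> set xs \<Longrightarrow> f a = g a) \<Longrightarrow> sum_list (map f xs) = sum_list (map g xs)"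
  by (metis map_cong)

lemma sum_list_nth_eq: "(\<Sum>k<length xs. f (xs ! k)) = sum_list (map f xs)"
  by (simp add: sum_list_sum_nth atLeast0LessThan)

lemma sum_swap_list: "(\<Sum>x\<in>UNIV. sum_list (map (\<lambda>a. if a = x then \<phi> a else 0) xs)) = sum_list (map \<phi> (xs :: 'a::finite list)) "
proof (induction xs)
  case Nil then show ?case by simp
next
  case (Cons b xs)
  have "(\<Sum>x\<in>UNIV. sum_list (map (\<lambda>a. if a = x then \<phi> a else 0) (b # xs)))
     = (\<Sum>x\<in>UNIV. (if b = x then \<phi> b else 0)) + (\<Sum>x\<in>UNIV. sum_list (map (\<lambda>a. if a = x then \<phi> a else 0) xs))"
    by (simp add: sum.distrib)
  also have "(\<Sum>x\<in>UNIV. (if b = x then \<phi> b else (0::'b))) = \<phi> b" by simp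
  finally show ?case using Cons by simp
qed

lemma select_pmf_eq:
  fixes w :: "'a \<Rightarrow> real"
  assumes wpos: "\<forall>a. w a > 0" and ne: "xs \<noteq> []"
  shows "pmf (select_pmf w xs) x = sum_list (map (\<lambda>a. if a = x then w a else 0) xs) / sum_list (map w xs)"
proof -
  define S where "S = (\<Sum>k<length xs. w (xs ! k))"
  have Spos: "S > 0" unfolding S_def using ne wpos by (intro sum_pos) auto
  define \<phi> where "\<phi> = (\<lambda>m. if m < length xs then w (xs ! m) / S else 0)"
  have nn: "\<And>m. 0 \<le> \<phi> m" unfolding \<phi>_def using wpos Spos by (auto intro: less_imp_le)
  have "(\<integral>\<^sup>+m. ennreal (\<phi> m) \<partial>count_space UNIV) = (\<Sum>m\<in>{..<length xs}. ennreal (\<phi> m))"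
    by (rule nn_integral_count_space') (auto simp: \<phi>_def)
  also have "\<dots> = ennreal (\<Sum>m\<in>{..<length xs}. \<phi> m)" using nn by simp
  also have "(\<Sum>m\<in>{..<length xs}. \<phi> m) = (\<Sum>m\<in>{..<length xs}. w (xs ! m)) / S"
    by (simp add: \<phi>_def sum_divide_distrib)
  also have "\<dots> = 1" using Spos S_def by simp
  finally have prob: "(\<integral>\<^sup>+m. ennreal (\<phi> m) \<partial>count_space UNIV) = 1" by simp
  have sel: "select_pmf w xs = map_pmf (\<lambda>m. xs ! m) (embed_pmf \<phi>)"
    unfolding select_pmf_def \<phi>_def S_def by simp
  have pe: "\<And>m. pmf (embed_pmf \<phi>) m = \<phi> m" using pmf_embed_pmf[OF nn prob] .
  have setp: "set_pmf (embed_pmf \<phi>) = {..<length xs}"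
  proof -
    have wne: "\<And>a. w a \<noteq> 0" using wpos by (metis less_irrefl)
    show ?thesis using set_embed_pmf[OF nn prob] wne Spos by (auto simp: \<phi>_def)
  qed
  have "pmf (select_pmf w xs) x = measure (measure_pmf (embed_pmf \<phi>)) ((\<lambda>m. xs ! m) -` {x})"
    by (simp add: sel pmf_map)
  also have "\<dots> = measure (measure_pmf (embed_pmf \<phi>)) ((\<lambda>m. xs ! m) -` {x} \<inter> set_pmf (embed_pmf \<phi>))"
    by (simp add: measure_Int_set_pmf)
  also have "\<dots> = (\<Sum>m\<in>{m. m < length xs \<and> xs ! m = x}. \<phi> m)"
    by (subst measure_measure_pmf_finite) (auto simp: setp pe intro!: sum.cong)
  also have "\<dots> = (\<Sum>m<length xs. if xs ! m = x then w (xs ! m) else 0) / S"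
    unfolding sum_divide_distrib
    by (rule sum.mono_neutral_cong_left) (auto simp: \<phi>_def)
  also have "(\<Sum>m<length xs. if xs ! m = x then w (xs ! m) else 0) = sum_list (map (\<lambda>a. if a = x then w a else 0) xs)"
    using sum_list_nth_eq[of "\<lambda>a. if a = x then w a else 0" xs] by simp
  also have "S = sum_list (map w xs)" unfolding S_def by (rule sum_list_nth_eq)
  finally show ?thesis .
qed



lemma sl_div_diff: "sum_list (map f xs) / S - sum_list (map g xs) / c = sum_list (map (\<lambda>a. f a / S - g a / c) xs)"
  for f g :: "'a \<Rightarrow> real"
  by (induction xs) (auto simp: add_divide_distrib algebra_simps diff_divide_distrib)

lemma sl_abs: "\<bar>sum_list (map f xs)\<bar> \<le> sum_list (map (\<lambda>a. \<bar>f a\<bar>) xs)" for f :: "'a \<Rightarrow> real"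
  by (induction xs) (auto intro: order_trans[OF abs_triangle_ineq])

lemma sl_lin: "sum_list (map (\<lambda>a. f a * c1 + c2) xs) = sum_list (map f xs) * c1 + real (length xs) * c2"
  for f :: "'a \<Rightarrow> real"
  by (induction xs) (auto simp: algebra_simps)

lemma sl_minus_const: "sum_list (map (\<lambda>a. f a - c) xs) = sum_list (map f xs) - real (length xs) * c"
  for f :: "'a \<Rightarrow> real"
  by (induction xs) (auto simp: algebra_simps)

lemma exp_abs_le_sqrt: "measure_pmf.expectation (iid_list n (p::'a::finite pmf)) (\<lambda>xs. \<bar>X xs\<bar>)
   \<le> sqrt (measure_pmf.expectation (iid_list n p) (\<lambda>xs. (X xs)\<^sup>2))"
proof -
  let ?q = "iid_list n p"
  define c where "c = measure_pmf.expectation ?q (\<lambda>xs. \<bar>X xs\<bar>)"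
  have "0 \<le> measure_pmf.expectation ?q (\<lambda>xs. (\<bar>X xs\<bar> - c)\<^sup>2)" by simp
  also have "(\<lambda>xs. (\<bar>X xs\<bar> - c)\<^sup>2) = (\<lambda>xs. (X xs)\<^sup>2 - 2 * c * \<bar>X xs\<bar> + c\<^sup>2)"
    by (auto simp: power2_eq_square algebra_simps)
  also have "measure_pmf.expectation ?q \<dots> = measure_pmf.expectation ?q (\<lambda>xs. (X xs)\<^sup>2) - 2 * c * c + c\<^sup>2"
    by (simp add: c_def)
  finally have "c\<^sup>2 \<le> measure_pmf.expectation ?q (\<lambda>xs. (X xs)\<^sup>2)" by (simp add: power2_eq_square)
  then show ?thesis unfolding c_def by (rule real_le_rsqrt)
qed



lemma step_bound:
  fixes p :: "'a::finite pmf" and w E :: "'a \<Rightarrow> real" and M :: nat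
  assumes wpos: "\<forall>a. w a > 0" and werr: "\<forall>a. \<bar>E a - w a\<bar> \<le> eps"
    and Eb: "\<forall>a. lo \<le> E a \<and> E a \<le> hi" and lo: "lo > 0" and M: "M \<ge> 1"
  shows "(\<Sum>a\<in>UNIV. pmf p a * E a) *
         (\<Sum>x\<in>UNIV. \<bar>pmf (bind_pmf (iid_list M p) (select_pmf w)) x - pmf p x * E x / (\<Sum>a\<in>UNIV. pmf p a * E a)\<bar>)
         \<le> 2 * eps + (hi - lo + eps) / sqrt (real M)"
proof -
  define Z where "Z = (\<Sum>a\<in>UNIV. pmf p a * E a)"
  define q where "q = iid_list M p"
  have p1: "(\<Sum>a\<in>UNIV. pmf p a) = 1" by (rule sum_pmf_eq_1) auto
  have "(\<Sum>a\<in>UNIV. pmf p a * lo) \<le> Z" unfolding Z_def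
    using Eb by (intro sum_mono mult_left_mono) auto
  then have Zlo: "lo \<le> Z" using p1 by (simp add: sum_distrib_right[symmetric])
  have "Z \<le> (\<Sum>a\<in>UNIV. pmf p a * hi)" unfolding Z_def
    using Eb by (intro sum_mono mult_left_mono) auto
  then have Zhi: "Z \<le> hi" using p1 by (simp add: sum_distrib_right[symmetric])
  have Zpos: "Z > 0" using Zlo lo by linarith
  have eps0: "eps \<ge> 0" using werr by (meson abs_ge_zero order_trans)
  have Mpos: "real M > 0" using M by simp
  define S where "S = (\<lambda>xs. sum_list (map w xs))"
  define Hq where "Hq = (\<lambda>xs x. sum_list (map (\<lambda>a. if a = x then w a else 0) xs) / S xs)"
  define Hk where "Hk = (\<lambda>xs x. sum_list (map (\<lambda>a. if a = x then E a else 0) xs) / (real M * Z))"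
  have lenq: "\<And>xs. xs \<in> set_pmf q \<Longrightarrow> length xs = M" unfolding q_def by (rule iid_len)
  have Qeq: "pmf (bind_pmf q (select_pmf w)) x = measure_pmf.expectation q (\<lambda>xs. Hq xs x)" for x
    unfolding pmf_bind
  proof (rule integral_cong_AE)
    show "AE xs in measure_pmf q. pmf (select_pmf w xs) x = Hq xs x"
      unfolding AE_measure_pmf_iff
    proof
      fix xs assume "xs \<in> set_pmf q"
      then have "xs \<noteq> []" using lenq M by fastforce
      then show "pmf (select_pmf w xs) x = Hq xs x" unfolding Hq_def S_def
        by (rule select_pmf_eq[OF wpos])
    qed
  qed auto
  have Keq: "pmf p x * E x / Z = measure_pmf.expectation q (\<lambda>xs. Hk xs x)" for x
  proof -
    have "measure_pmf.expectation q (\<lambda>xs. Hk xs x)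
       = measure_pmf.expectation q (\<lambda>xs. sum_list (map (\<lambda>a. if a = x then E a else 0) xs)) / (real M * Z)"
      unfolding Hk_def by simp
    also have "\<dots> = real M * (\<Sum>a\<in>UNIV. pmf p a * (if a = x then E a else 0)) / (real M * Z)"
      unfolding q_def iid_E1 by simp
    also have "(\<Sum>a\<in>UNIV. pmf p a * (if a = x then E a else 0)) = pmf p x * E x"
      by (simp add: if_distrib cong: if_cong)
    finally show ?thesis using Mpos by simp
  qed
  have "(\<Sum>x\<in>UNIV. \<bar>pmf (bind_pmf q (select_pmf w)) x - pmf p x * E x / Z\<bar>)
     = (\<Sum>x\<in>UNIV. \<bar>measure_pmf.expectation q (\<lambda>xs. Hq xs x - Hk xs x)\<bar>)"
    unfolding Qeq Keq by (simp add: q_def)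
  also have "\<dots> \<le> (\<Sum>x\<in>UNIV. measure_pmf.expectation q (\<lambda>xs. \<bar>Hq xs x - Hk xs x\<bar>))"
    by (intro sum_mono integral_abs_bound)
  also have "\<dots> = measure_pmf.expectation q (\<lambda>xs. \<Sum>x\<in>UNIV. \<bar>Hq xs x - Hk xs x\<bar>)"
    unfolding q_def by (simp add: integral_sum)
  also have "\<dots> \<le> measure_pmf.expectation q (\<lambda>xs. \<bar>S xs / real M - Z\<bar> / Z + eps / Z)"
  proof (rule integral_mono_AE)
    show "AE xs in measure_pmf q. (\<Sum>x\<in>UNIV. \<bar>Hq xs x - Hk xs x\<bar>) \<le> \<bar>S xs / real M - Z\<bar> / Z + eps / Z"
      unfolding AE_measure_pmf_iff
    proof
      fix xs assume xs: "xs \<in> set_pmf q"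
      then have len: "length xs = M" by (rule lenq)
      then have "xs \<noteq> []" using M by fastforce
      then have Spos: "S xs > 0" unfolding S_def sum_list_nth_eq[symmetric] using wpos
        by (intro sum_pos) auto
      define c1 where "c1 = 1 / S xs - 1 / (real M * Z)"
      have "(\<Sum>x\<in>UNIV. \<bar>Hq xs x - Hk xs x\<bar>)
          = (\<Sum>x\<in>UNIV. \<bar>sum_list (map (\<lambda>a. if a = x then (w a / S xs - E a / (real M * Z)) else 0) xs)\<bar>)"
        unfolding Hq_def Hk_def sl_div_diff by (intro sum.cong refl arg_cong[where f=abs] sum_list_cong_set) auto
      also have "\<dots> \<le> (\<Sum>x\<in>UNIV. sum_list (map (\<lambda>a. if a = x then \<bar>w a / S xs - E a / (real M * Z)\<bar> else 0) xs))"
        by (intro sum_mono order_trans[OF sl_abs] eq_imp_le sum_list_cong_set) (auto simp: if_distrib[of abs])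
      also have "\<dots> = sum_list (map (\<lambda>a. \<bar>w a / S xs - E a / (real M * Z)\<bar>) xs)"
        by (rule sum_swap_list)
      also have "\<dots> \<le> sum_list (map (\<lambda>a. w a * \<bar>c1\<bar> + eps / (real M * Z)) xs)"
      proof (rule sum_list_mono)
        fix a
        have "w a / S xs - E a / (real M * Z) = w a * c1 + (w a - E a) / (real M * Z)"
          unfolding c1_def using Spos Mpos Zpos by (simp add: field_simps)
        also have "\<bar>\<dots>\<bar> \<le> \<bar>w a * c1\<bar> + \<bar>(w a - E a) / (real M * Z)\<bar>" by (rule abs_triangle_ineq)
        also have "\<bar>w a * c1\<bar> = w a * \<bar>c1\<bar>" using wpos by (simp add: abs_mult less_imp_le)
        also have "\<bar>(w a - E a) / (real M * Z)\<bar> = \<bar>E a - w a\<bar> / (real M * Z)"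
          using Mpos Zpos by (simp add: abs_divide abs_minus_commute)
        also have "\<dots> \<le> eps / (real M * Z)"
          using werr Mpos Zpos by (intro divide_right_mono) auto
        finally show "\<bar>w a / S xs - E a / (real M * Z)\<bar> \<le> w a * \<bar>c1\<bar> + eps / (real M * Z)" by simp
      qed
      also have "\<dots> = S xs * \<bar>c1\<bar> + real M * (eps / (real M * Z))"
        unfolding sl_lin S_def len ..
      also have "S xs * \<bar>c1\<bar> = \<bar>S xs / real M - Z\<bar> / Z"
      proof -
        have "S xs * c1 = - ((S xs / real M - Z) / Z)"
          unfolding c1_def using Spos Mpos Zpos by (simp add: field_simps)
        then have "S xs * \<bar>c1\<bar> = \<bar>(S xs / real M - Z) / Z\<bar>" using Spos
          by (metis abs_minus_cancel abs_mult abs_of_pos)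
        then show ?thesis using Zpos by (simp add: abs_divide)
      qed
      also have "real M * (eps / (real M * Z)) = eps / Z" using Mpos by simp
      finally show "(\<Sum>x\<in>UNIV. \<bar>Hq xs x - Hk xs x\<bar>) \<le> \<bar>S xs / real M - Z\<bar> / Z + eps / Z" .
    qed
  qed (auto simp: q_def)
  also have "\<dots> = (measure_pmf.expectation q (\<lambda>xs. \<bar>S xs / real M - Z\<bar>) + eps) / Z"
    by (simp add: q_def add_divide_distrib)
  finally have main: "Z * (\<Sum>x\<in>UNIV. \<bar>pmf (bind_pmf q (select_pmf w)) x - pmf p x * E x / Z\<bar>)
       \<le> measure_pmf.expectation q (\<lambda>xs. \<bar>S xs / real M - Z\<bar>) + eps"
    using Zpos by (simp add: field_simps)
  define G where "G = (\<lambda>a. w a - Z)"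
  define A where "A = (\<Sum>a\<in>UNIV. pmf p a * (G a)\<^sup>2)"
  define B where "B = (\<Sum>a\<in>UNIV. pmf p a * G a)"
  have "measure_pmf.expectation q (\<lambda>xs. (S xs / real M - Z)\<^sup>2)
      = measure_pmf.expectation q (\<lambda>xs. (sum_list (map G xs))\<^sup>2 / (real M)\<^sup>2)"
  proof (rule integral_cong_AE)
    show "AE xs in measure_pmf q. (S xs / real M - Z)\<^sup>2 = (sum_list (map G xs))\<^sup>2 / (real M)\<^sup>2"
      unfolding AE_measure_pmf_iff
    proof
      fix xs assume "xs \<in> set_pmf q"
      then have len: "length xs = M" by (rule lenq)
      have "sum_list (map G xs) = S xs - real M * Z" unfolding G_def S_def sl_minus_const len ..
      then have "S xs / real M - Z = sum_list (map G xs) / real M"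
        using Mpos by (simp add: field_simps)
      then show "(S xs / real M - Z)\<^sup>2 = (sum_list (map G xs))\<^sup>2 / (real M)\<^sup>2"
        by (simp add: power_divide)
    qed
  qed (auto simp: q_def)
  also have "\<dots> = (real M * A + real M * (real M - 1) * B\<^sup>2) / (real M)\<^sup>2"
    unfolding q_def by (simp add: iid_E2 A_def B_def)
  also have "\<dots> = A / real M + (real M - 1) / real M * B\<^sup>2"
    using Mpos by (simp add: field_simps power2_eq_square)
  also have "\<dots> \<le> A / real M + B\<^sup>2"
    using Mpos by (intro add_left_mono mult_left_le_one_le) auto
  finally have var: "measure_pmf.expectation q (\<lambda>xs. (S xs / real M - Z)\<^sup>2) \<le> A / real M + B\<^sup>2" .
  have Gb: "\<bar>G a\<bar> \<le> hi - lo + eps" for a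
  proof -
    have "\<bar>G a\<bar> \<le> \<bar>w a - E a\<bar> + \<bar>E a - Z\<bar>" unfolding G_def by linarith
    moreover have "\<bar>w a - E a\<bar> \<le> eps" using werr by (simp add: abs_minus_commute)
    moreover have "\<bar>E a - Z\<bar> \<le> hi - lo" using Eb[rule_format, of a] Zlo Zhi by (auto simp: abs_le_iff)
    ultimately show ?thesis by linarith
  qed
  have A0: "0 \<le> A" unfolding A_def by (intro sum_nonneg) auto
  have "A \<le> (\<Sum>a\<in>UNIV. pmf p a * (hi - lo + eps)\<^sup>2)" unfolding A_def
  proof (intro sum_mono mult_left_mono)
    fix a show "(G a)\<^sup>2 \<le> (hi - lo + eps)\<^sup>2"
      using Gb[of a] by (metis abs_ge_zero abs_le_square_iff order_trans power2_abs abs_of_nonneg)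
  qed auto
  then have Ab: "A \<le> (hi - lo + eps)\<^sup>2" using p1 by (simp add: sum_distrib_right[symmetric])
  have "B = (\<Sum>a\<in>UNIV. pmf p a * (w a - E a))"
  proof -
    have "B = (\<Sum>a\<in>UNIV. pmf p a * w a) - (\<Sum>a\<in>UNIV. pmf p a) * Z"
      unfolding B_def G_def by (simp add: algebra_simps sum_subtractf sum_distrib_right sum_distrib_left)
    also have "\<dots> = (\<Sum>a\<in>UNIV. pmf p a * w a) - Z" using p1 by simp
    also have "\<dots> = (\<Sum>a\<in>UNIV. pmf p a * (w a - E a))"
      unfolding Z_def by (simp add: algebra_simps sum_subtractf)
    finally show ?thesis .
  qed
  then have "\<bar>B\<bar> \<le> (\<Sum>a\<in>UNIV. pmf p a * eps)"
    using werr by (auto intro!: order_trans[OF sum_abs] sum_mono mult_left_mono simp: abs_mult abs_minus_commute)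
  then have Bb: "\<bar>B\<bar> \<le> eps" using p1 by (simp add: sum_distrib_right[symmetric])
  have hle: "hi - lo + eps \<ge> 0" using Zlo Zhi eps0 by linarith
  have "measure_pmf.expectation q (\<lambda>xs. \<bar>S xs / real M - Z\<bar>)
      \<le> sqrt (measure_pmf.expectation q (\<lambda>xs. (S xs / real M - Z)\<^sup>2))"
    unfolding q_def by (rule exp_abs_le_sqrt)
  also have "\<dots> \<le> sqrt (A / real M + B\<^sup>2)" using var by simp
  also have "\<dots> \<le> sqrt (A / real M) + sqrt (B\<^sup>2)"
    using A0 Mpos by (intro sqrt_add_le_add_sqrt) auto
  also have "sqrt (A / real M) = sqrt A / sqrt (real M)" by (simp add: real_sqrt_divide)
  also have "sqrt A \<le> hi - lo + eps" using Ab hle A0 by (metis real_sqrt_abs real_sqrt_le_mono abs_of_nonneg)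
  also have "sqrt (B\<^sup>2) \<le> eps" using Bb by simp
  finally have "measure_pmf.expectation q (\<lambda>xs. \<bar>S xs / real M - Z\<bar>) \<le> (hi - lo + eps) / sqrt (real M) + eps"
    using Mpos by (simp add: divide_right_mono)
  with main show ?thesis unfolding Z_def q_def by linarith
qed



lemma mix_bound:
  fixes Q K :: "'a::finite \<Rightarrow> real" and F G :: "'a \<Rightarrow> 'b::finite \<Rightarrow> real"
  assumes F0: "\<forall>a b. F a b \<ge> 0" and F1: "\<forall>a. (\<Sum>b\<in>UNIV. F a b) = 1" and K0: "\<forall>a. K a \<ge> 0"
  shows "(\<Sum>b\<in>UNIV. \<bar>\<Sum>a\<in>UNIV. Q a * F a b - K a * G a b\<bar>)
         \<le> (\<Sum>a\<in>UNIV. \<bar>Q a - K a\<bar>) + (\<Sum>a\<in>UNIV. K a * (\<Sum>b\<in>UNIV. \<bar>F a b - G a b\<bar>))"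
proof -
  have "(\<Sum>b\<in>UNIV. \<bar>\<Sum>a\<in>UNIV. Q a * F a b - K a * G a b\<bar>)
      \<le> (\<Sum>b\<in>UNIV. \<Sum>a\<in>UNIV. \<bar>Q a - K a\<bar> * F a b + K a * \<bar>F a b - G a b\<bar>)"
  proof (intro sum_mono order_trans[OF sum_abs])
    fix b a
    have "Q a * F a b - K a * G a b = (Q a - K a) * F a b + K a * (F a b - G a b)"
      by (simp add: algebra_simps)
    also have "\<bar>\<dots>\<bar> \<le> \<bar>Q a - K a\<bar> * F a b + K a * \<bar>F a b - G a b\<bar>"
      using F0 K0 by (metis abs_mult abs_of_nonneg abs_triangle_ineq)
    finally show "\<bar>Q a * F a b - K a * G a b\<bar> \<le> \<bar>Q a - K a\<bar> * F a b + K a * \<bar>F a b - G a b\<bar>" .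
  qed
  also have "\<dots> = (\<Sum>a\<in>UNIV. \<bar>Q a - K a\<bar> * (\<Sum>b\<in>UNIV. F a b)) + (\<Sum>a\<in>UNIV. K a * (\<Sum>b\<in>UNIV. \<bar>F a b - G a b\<bar>))"
    by (subst sum.swap) (simp add: sum.distrib sum_distrib_left)
  also have "\<dots> = (\<Sum>a\<in>UNIV. \<bar>Q a - K a\<bar>) + (\<Sum>a\<in>UNIV. K a * (\<Sum>b\<in>UNIV. \<bar>F a b - G a b\<bar>))"
    using F1 by simp
  finally show ?thesis .
qed

lemma energy_sum: "energy compl r lam y s (x::'x::finite) = (\<Sum>x0\<in>UNIV. pmf (compl y s x) x0 * exp (r y x0 / lam))"
  unfolding energy_def exp_sum ..

lemma TV_le1: "TV p q \<le> 1"
proof -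
  have "(\<Sum>x\<in>UNIV. \<bar>pmf p x - pmf q x\<bar>) \<le> (\<Sum>x\<in>UNIV. pmf p x + pmf q x)"
    by (intro sum_mono) (simp add: abs_le_iff)
  also have "\<dots> = 2" using sum_pmf_eq_1[of UNIV p] sum_pmf_eq_1[of UNIV q] by (simp add: sum.distrib)
  finally show ?thesis unfolding TV_def by simp
qed

lemma ln2_half: "ln (2::real) \<ge> 1/2"
proof -
  have "ln (exp (1/2)) \<le> ln (2::real)" using exp_half_le2 by (subst ln_le_cancel_iff) auto
  then show ?thesis by simp
qed



theorem proposition3:
  fixes T :: nat and I M :: nat and lam D eps :: real
    and ptr :: "'y \<Rightarrow> real \<Rightarrow> real \<Rightarrow> 'x::finite \<Rightarrow> 'x pmf"
    and compl :: "'y \<Rightarrow> real \<Rightarrow> 'x \<Rightarrow> 'x pmf"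
    and r :: "'y \<Rightarrow> 'x \<Rightarrow> real"
    and Ehat :: "'y \<Rightarrow> real \<Rightarrow> 'x \<Rightarrow> real"
    and xT :: 'x and y :: 'y
  assumes cons: "consistent_ref (real T) ptr compl"
    and rbound: "\<forall>y' x0. r y' x0 \<in> {-D..D}"
    and lam: "lam > 0" and M: "M \<ge> 1" and I: "1 \<le> I" "I \<le> T" and eps: "eps > 0"
    and est: "\<forall>y' s x. 0 \<le> s \<and> s \<le> real T \<longrightarrow> \<bar>energy compl r lam y' s x - Ehat y' s x\<bar> \<le> eps"
    and est_pos: "\<forall>y' s x. 0 \<le> s \<and> s \<le> real T \<longrightarrow> Ehat y' s x > 0"
    and Cpos: "normC compl (real T) xT r lam y - eps - hfun eps M lam D > 0"
  shows "TV (ets_output (real T) I ptr Ehat M xT y) (target compl (real T) xT r lam y)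
           \<le> real I * ((2 * eps + hfun eps M lam D)
                        / (normC compl (real T) xT r lam y - eps - hfun eps M lam D))
             + real I * eps"
proof -
  define C where "C = normC compl (real T) xT r lam y"
  define h where "h = hfun eps M lam D"
  define lo where "lo = exp (- D / lam)"
  define hi where "hi = exp (D / lam)"
  have D0: "D \<ge> 0" using rbound[rule_format, of y xT] by simp
  have lo0: "lo > 0" unfolding lo_def by simp
  have lohi: "lo \<le> hi" unfolding lo_def hi_def using D0 lam by (simp add: divide_right_mono)
  have rb: "lo \<le> exp (r y' x0 / lam) \<and> exp (r y' x0 / lam) \<le> hi" for y' x0
  proof -
    have a: "-D \<le> r y' x0" "r y' x0 \<le> D" using rbound by auto
    have b1: "-D / lam \<le> r y' x0 / lam" using a lam by (intro divide_right_mono) auto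
    have b2: "r y' x0 / lam \<le> D / lam" using a lam by (intro divide_right_mono) auto
    show ?thesis unfolding lo_def hi_def using b1 b2 by simp
  qed
  have Eb: "lo \<le> energy compl r lam y s x \<and> energy compl r lam y s x \<le> hi" for s x
  proof -
    have p1: "(\<Sum>a\<in>UNIV. pmf (compl y s x) a) = 1" by (rule sum_pmf_eq_1) auto
    have "(\<Sum>a\<in>UNIV. pmf (compl y s x) a * lo) \<le> energy compl r lam y s x"
      unfolding energy_sum using rb by (intro sum_mono mult_left_mono) auto
    moreover have "energy compl r lam y s x \<le> (\<Sum>a\<in>UNIV. pmf (compl y s x) a * hi)"
      unfolding energy_sum using rb by (intro sum_mono mult_left_mono) auto
    ultimately show ?thesis using p1 by (simp add: sum_distrib_right[symmetric])
  qed
  have CE: "C = energy compl r lam y (real T) xT"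
    unfolding C_def normC_def pref0_def energy_sum ..
  have C0: "C > 0" using Eb[of "real T" xT] lo0 CE by linarith
  have den: "C - eps - h > 0" using Cpos unfolding C_def h_def .
  have TVb: "TV (ets_output (real T) I ptr Ehat M xT y) (target compl (real T) xT r lam y)
     \<le> real I * ((2 * eps + h) / (C - eps - h)) + real I * eps"
  proof (cases "eps < 1")
    case False
    have Ir: "real I \<ge> 1" using I by simp
    have "1 \<le> real I * ((2 * eps + h) / (C - eps - h)) + real I * eps"
    proof (cases "eps < 2")
      case True
      have "ln (2 / eps) > 0" using True eps by simp
      then have "h \<ge> 0" unfolding h_def hfun_def using lohi
        by (simp add: lo_def hi_def)
      then have "(2 * eps + h) / (C - eps - h) \<ge> 0" using den eps by simp
      then have "real I * ((2 * eps + h) / (C - eps - h)) \<ge> 0" by (intro mult_nonneg_nonneg) auto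
      moreover have "real I * eps \<ge> 1" using Ir False by (metis less_le_not_le mult_mono' not_le_imp_less mult_1_right zero_le_one order_trans)
      ultimately show ?thesis by linarith
    next
      case False
      have "(2 * eps + h) / (C - eps - h) \<ge> -1" using den C0 eps by (simp add: field_simps)
      then have "(2 * eps + h) / (C - eps - h) + eps \<ge> 1" using False by linarith
      then have "real I * ((2 * eps + h) / (C - eps - h) + eps) \<ge> 1 * 1"
        using Ir by (intro mult_mono) auto
      then show ?thesis by (simp add: algebra_simps)
    qed
    then show ?thesis using TV_le1 order_trans by blast
  next
    case True
    define tt where "tt i = tstep (real T) I i" for i
    define En where "En i x = energy compl r lam y (tt i) x" for i x
    define f where "f i x = ets_from (real T) I ptr Ehat M y i x" for i x
    define g where "g i x x0 = pmf (compl y (tt i) x) x0 * exp (r y x0 / lam) / En i x" for i x x0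
    define d where "d i x = (\<Sum>x0\<in>UNIV. \<bar>pmf (f i x) x0 - g i x x0\<bar>)" for i x
    define B where "B = 2 * eps + (hi - lo + eps) / sqrt (real M)"
    have Tpos: "real T > 0" using I by simp
    have Ipos: "real I > 0" using I by simp
    have tt_rng: "0 \<le> tt i \<and> tt i \<le> real T" if "i \<le> I" for i
    proof -
      have "real i \<le> real I" using that by simp
      then have "real i * real T \<le> real I * real T" using Tpos by (intro mult_right_mono) auto
      then show ?thesis unfolding tt_def tstep_def using Ipos Tpos by (auto simp: field_simps)
    qed
    have tt_lt: "tt i < tt (Suc i)" for i
      unfolding tt_def tstep_def using Ipos Tpos by (simp add: field_simps)
    have tt0: "tt 0 = 0" unfolding tt_def tstep_def by simp
    have ttI: "tt I = real T" unfolding tt_def tstep_def using Ipos by simp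
    have Enb: "lo \<le> En i x \<and> En i x \<le> hi" for i x unfolding En_def by (rule Eb)
    have Enpos: "En i x > 0" for i x using Enb[of i x] lo0 by linarith
    have Enne: "En i x \<noteq> 0" for i x using Enpos[of i x] by simp
    have pmf1: "(\<Sum>a\<in>UNIV. pmf q a) = 1" for q :: "'x pmf" by (rule sum_pmf_eq_1) auto
    have claim: "i \<le> I \<Longrightarrow> En i x * d i x \<le> real i * B" for i x
    proof (induction i arbitrary: x)
      case 0
      have c0: "compl y 0 x = return_pmf x" using cons unfolding consistent_ref_def by blast
      have e0: "En 0 x = exp (r y x / lam)"
        unfolding En_def energy_sum tt0 c0 by (simp add: pmf_return indicator_def if_distrib cong: if_cong)
      have "g 0 x x0 = pmf (f 0 x) x0" for x0
        unfolding g_def f_def tt0 c0 e0 by (simp add: pmf_return indicator_def)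
      then have "d 0 x = 0" unfolding d_def by simp
      then show ?case by simp
    next
      case (Suc i)
      define s where "s = tt i"
      define t where "t = tt (Suc i)"
      have s0: "0 \<le> s" and st: "s < t" and tT: "t \<le> real T" and sT: "s \<le> real T"
        using tt_rng[of i] tt_rng[of "Suc i"] tt_lt[of i] Suc.prems unfolding s_def t_def by auto
      define p where "p = ptr y t s x"
      have hc: "compl y t x = bind_pmf p (compl y s)"
        using cons s0 st tT unfolding consistent_ref_def p_def by blast
      have hpc: "pmf (compl y t x) x0 = (\<Sum>x'\<in>UNIV. pmf p x' * pmf (compl y s x') x0)" for x0
        unfolding hc pmf_bind exp_sum ..
      have hE: "En (Suc i) x = (\<Sum>x'\<in>UNIV. pmf p x' * En i x')"
      proof -
        have "En (Suc i) x = (\<Sum>x0\<in>UNIV. \<Sum>x'\<in>UNIV. pmf p x' * pmf (compl y s x') x0 * exp (r y x0 / lam))"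
          unfolding En_def energy_sum t_def[symmetric] hpc by (simp add: sum_distrib_right)
        also have "\<dots> = (\<Sum>x'\<in>UNIV. pmf p x' * En i x')"
          unfolding En_def energy_sum s_def[symmetric] by (subst sum.swap) (simp add: sum_distrib_left mult.assoc)
        finally show ?thesis .
      qed
      define Q where "Q x' = pmf (ets_step ptr Ehat M y t s x) x'" for x'
      define K where "K x' = pmf p x' * En i x' / En (Suc i) x" for x'
      have hf: "pmf (f (Suc i) x) x0 = (\<Sum>x'\<in>UNIV. Q x' * pmf (f i x') x0)" for x0
        unfolding f_def Q_def t_def s_def tt_def by (simp add: pmf_bind exp_sum)
      have hg: "g (Suc i) x x0 = (\<Sum>x'\<in>UNIV. K x' * g i x' x0)" for x0
      proof -
        have "(\<Sum>x'\<in>UNIV. K x' * g i x' x0)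
           = (\<Sum>x'\<in>UNIV. pmf p x' * pmf (compl y s x') x0) * exp (r y x0 / lam) / En (Suc i) x"
          unfolding K_def g_def s_def sum_distrib_right sum_divide_distrib
          by (intro sum.cong refl) (simp add: field_simps Enne)
        then show ?thesis unfolding g_def t_def[symmetric] hpc by simp
      qed
      have K0: "\<forall>a. K a \<ge> 0" unfolding K_def using Enpos by (simp add: less_imp_le)
      have hd: "d (Suc i) x \<le> (\<Sum>a\<in>UNIV. \<bar>Q a - K a\<bar>) + (\<Sum>a\<in>UNIV. K a * d i a)"
        unfolding d_def hf hg sum_subtractf[symmetric]
        by (rule mix_bound) (auto simp: K0 pmf1)
      have sb: "En (Suc i) x * (\<Sum>a\<in>UNIV. \<bar>Q a - K a\<bar>) \<le> B"
      proof -
        have "(\<Sum>a\<in>UNIV. pmf p a * En i a) *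
           (\<Sum>x'\<in>UNIV. \<bar>pmf (bind_pmf (iid_list M p) (select_pmf (Ehat y s))) x' - pmf p x' * En i x' / (\<Sum>a\<in>UNIV. pmf p a * En i a)\<bar>)
           \<le> 2 * eps + (hi - lo + eps) / sqrt (real M)"
        proof (rule step_bound)
          show "\<forall>a. 0 < Ehat y s a" using est_pos s0 sT by blast
          show "\<forall>a. \<bar>En i a - Ehat y s a\<bar> \<le> eps" unfolding En_def s_def[symmetric] using est s0 sT by blast
          show "\<forall>a. lo \<le> En i a \<and> En i a \<le> hi" using Enb by blast
        qed (use lo0 M in auto)
        then show ?thesis unfolding B_def Q_def K_def ets_step_def p_def[symmetric] hE[symmetric] .
      qed
      have "En (Suc i) x * d (Suc i) x \<le> En (Suc i) x * ((\<Sum>a\<in>UNIV. \<bar>Q a - K a\<bar>) + (\<Sum>a\<in>UNIV. K a * d i a))"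
        using hd Enpos by (intro mult_left_mono) (auto simp: less_imp_le)
      also have "\<dots> = En (Suc i) x * (\<Sum>a\<in>UNIV. \<bar>Q a - K a\<bar>) + (\<Sum>a\<in>UNIV. pmf p a * (En i a * d i a))"
        unfolding distrib_left sum_distrib_left K_def
        by (simp add: field_simps Enne)
      also have "\<dots> \<le> B + (\<Sum>a\<in>UNIV. pmf p a * (real i * B))"
        using sb Suc.IH Suc.prems by (intro add_mono sum_mono mult_left_mono) auto
      also have "\<dots> = real (Suc i) * B" proof -
        have "(\<Sum>a\<in>UNIV. pmf p a * (real i * B)) = (\<Sum>a\<in>UNIV. pmf p a) * (real i * B)"
          by (simp add: sum_distrib_right)
        then show ?thesis using pmf1[of p] by (simp add: algebra_simps)
      qed
      finally show ?case .
    qed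
    have fin: "En I xT * d I xT \<le> real I * B" using claim by simp
    have EnI: "En I xT = C" unfolding En_def ttI CE ..
    have tgt: "pmf (target compl (real T) xT r lam y) x0 = g I xT x0" for x0
    proof -
      define \<phi> where "\<phi> x0 = pmf (pref0 compl (real T) xT y) x0 * exp (r y x0 / lam) / normC compl (real T) xT r lam y" for x0
      have nn: "\<And>x. 0 \<le> \<phi> x" unfolding \<phi>_def using C0 C_def by simp
      have "(\<Sum>x\<in>UNIV. \<phi> x) = 1"
        unfolding \<phi>_def sum_divide_distrib[symmetric] using C0 by (simp add: C_def normC_def)
      then have prob: "(\<integral>\<^sup>+x. ennreal (\<phi> x) \<partial>count_space UNIV) = 1"
        using nn by (simp add: nn_integral_count_space_finite)
      have "pmf (target compl (real T) xT r lam y) x0 = \<phi> x0"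
        unfolding target_def \<phi>_def[symmetric] by (rule pmf_embed_pmf[OF nn prob])
      then show ?thesis unfolding \<phi>_def g_def EnI ttI pref0_def C_def by simp
    qed
    have "TV (ets_output (real T) I ptr Ehat M xT y) (target compl (real T) xT r lam y) = d I xT / 2"
      unfolding TV_def d_def tgt f_def ets_output_def by simp
    also have "\<dots> \<le> real I * B / (2 * C)" using fin EnI C0 by (simp add: field_simps)
    also have "\<dots> \<le> real I * ((2 * eps + h) / (C - eps - h)) + real I * eps"
    proof -
      have Mge: "sqrt (real M) \<ge> 1" using M by simp
      have l2: "2 * ln (2 / eps) \<ge> 1"
      proof -
        have "ln 2 \<le> ln (2 / eps)" using True eps by (subst ln_le_cancel_iff) (auto simp: field_simps)
        then show ?thesis using ln2_half by linarith
      qed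
      have "1 / sqrt (real M) = sqrt (1 / real M)" by (simp add: real_sqrt_divide)
      also have "\<dots> \<le> sqrt (2 / real M * ln (2 / eps))"
        using l2 M by (intro real_sqrt_le_mono) (auto simp: field_simps)
      finally have sq: "1 / sqrt (real M) \<le> sqrt (2 / real M * ln (2 / eps))" .
      have hh: "(hi - lo) / 2 * (1 / sqrt (real M)) \<le> h"
        unfolding h_def hfun_def lo_def[symmetric] hi_def[symmetric]
        using sq lohi by (intro mult_left_mono) auto
      have h0: "h \<ge> 0" using hh lohi Mge by (metis divide_nonneg_nonneg mult_nonneg_nonneg diff_ge_0_iff_ge zero_le_numeral order_trans zero_le_one zero_le_divide_1_iff)
      have e1: "eps / sqrt (real M) \<le> eps" using Mge eps by (simp add: divide_le_eq)
      have "B / 2 = eps + (hi - lo) / 2 * (1 / sqrt (real M)) + (eps / sqrt (real M)) / 2"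
        unfolding B_def by (simp add: add_divide_distrib diff_divide_distrib)
      moreover have "\<And>b X Y. b = eps + X + Y / 2 \<Longrightarrow> X \<le> h \<Longrightarrow> Y \<le> eps \<Longrightarrow> b \<le> 2 * eps + h"
        using eps by linarith
      ultimately have "B / 2 \<le> 2 * eps + h" using hh e1 by blast
      then have "B / (2 * C) \<le> (2 * eps + h) / C" using C0 by (simp add: field_simps)
      also have "\<dots> \<le> (2 * eps + h) / (C - eps - h)"
        using den eps h0 by (intro divide_left_mono) auto
      finally have "real I * (B / (2 * C)) \<le> real I * ((2 * eps + h) / (C - eps - h))"
        by (intro mult_left_mono) auto
      moreover have "real I * eps \<ge> 0" using eps by simp
      ultimately show ?thesis by simp
    qed
    finally show ?thesis .
  qed
  then show ?thesis unfolding C_def h_def .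
qed

end
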